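(* For every integer $m\geq 2$ and every integer $n\geq 3$, the graph $mF_n$ (the disjoint union of $m$ copies of the fan $F_n$) is $C_3$-supermagic.
   Context: All graphs are finite and simple. For a graph $H$, a graph $G=(V,E)$ has an $H$-covering if every edge of $G$ belongs to a subgraph of $G$ isomorphic to $H$. For such $G$, an $H$-magic labeling is a bijection $\lambda: V\cup E\to\{1,2,\dots,|V|+|E|\}$ for which there is a constant $c$ such that for every subgraph $H'=(V',E')$ of $G$ isomorphic to $H$, $\sum_{v\in V'}\lambda(v)+\sum_{e\in E'}\lambda(e)=c$. It is $H$-supermagic if moreover $\{\lambda(v):v\in V\}=\{1,\dots,|V|\}$; $G$ is $H$-supermagic if it admits such a labeling. $C_k$ is the cycle of length $k$. $mG$ denotes the disjoint union of $m$ copies of $G$. For $n\geq 3$, the fan $F_n=K_1+P_n$ has vertices $c,v_1,\dots,v_n$ and edges $cv_i$ ($1\le i\le n$) and $v_iv_{i+1}$ ($1\le i\le n-1$). *)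

theory Defs
  imports Main
begin

text \<open>A graph is a pair (V, E) of a vertex set and a set of edges, each edge being a
  2-element subset of V.\<close>
type_synonym 'a graph = "'a set \<times> 'a set set"

definition simple_graph :: "'a graph \<Rightarrow> bool" where
  "simple_graph G \<longleftrightarrow> finite (fst G) \<and>
     (\<forall>e\<in>snd G. \<exists>u v. u \<in> fst G \<and> v \<in> fst G \<and> u \<noteq> v \<and> e = {u, v})"

definition is_subgraph :: "'a graph \<Rightarrow> 'a graph \<Rightarrow> bool" where
  "is_subgraph G' G \<longleftrightarrow> fst G' \<subseteq> fst G \<and> snd G' \<subseteq> snd G \<and> (\<forall>e\<in>snd G'. e \<subseteq> fst G')"

definition graph_iso :: "'b graph \<Rightarrow> 'a graph \<Rightarrow> bool" where
  "graph_iso H G \<longleftrightarrow> (\<exists>f. bij_betw f (fst H) (fst G) \<and>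
     (\<forall>u\<in>fst H. \<forall>v\<in>fst H. {u, v} \<in> snd H \<longleftrightarrow> {f u, f v} \<in> snd G))"

definition H_subgraphs :: "'a graph \<Rightarrow> 'b graph \<Rightarrow> 'a graph set" where
  "H_subgraphs G H = {G'. is_subgraph G' G \<and> graph_iso H G'}"

definition H_covering :: "'a graph \<Rightarrow> 'b graph \<Rightarrow> bool" where
  "H_covering G H \<longleftrightarrow> (\<forall>e\<in>snd G. \<exists>G'\<in>H_subgraphs G H. e \<in> snd G')"

text \<open>A total labeling of V \<union> E, with vertices as Inl and edges as Inr.\<close>
definition H_magic_labeling :: "'a graph \<Rightarrow> 'b graph \<Rightarrow> ('a + 'a set \<Rightarrow> nat) \<Rightarrow> bool" where
  "H_magic_labeling G H lam \<longleftrightarrow>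
     bij_betw lam (Inl ` fst G \<union> Inr ` snd G) {1..card (fst G) + card (snd G)} \<and>
     (\<exists>c. \<forall>G'\<in>H_subgraphs G H.
        (\<Sum>v\<in>fst G'. lam (Inl v)) + (\<Sum>e\<in>snd G'. lam (Inr e)) = c)"

definition H_supermagic_labeling :: "'a graph \<Rightarrow> 'b graph \<Rightarrow> ('a + 'a set \<Rightarrow> nat) \<Rightarrow> bool" where
  "H_supermagic_labeling G H lam \<longleftrightarrow>
     H_magic_labeling G H lam \<and> (\<lambda>v. lam (Inl v)) ` fst G = {1..card (fst G)}"

definition H_supermagic :: "'a graph \<Rightarrow> 'b graph \<Rightarrow> bool" where
  "H_supermagic G H \<longleftrightarrow> H_covering G H \<and> (\<exists>lam. H_supermagic_labeling G H lam)"

definition cycle_graph :: "nat \<Rightarrow> nat graph" where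
  "cycle_graph k = ({0..<k}, {{i, (i + 1) mod k} | i. i < k})"

text \<open>The fan F_n = K_1 + P_n: centre 0, path vertices 1..n.\<close>
definition fan :: "nat \<Rightarrow> nat graph" where
  "fan n = ({0..n}, {{0, i} | i. 1 \<le> i \<and> i \<le> n} \<union> {{i, i + 1} | i. 1 \<le> i \<and> i \<le> n - 1})"

definition copies :: "nat \<Rightarrow> 'a graph \<Rightarrow> (nat \<times> 'a) graph" where
  "copies m G = ({(i, v). i < m \<and> v \<in> fst G},
                 (\<Union>i<m. (\<lambda>e. Pair i ` e) ` snd G))"

end

theory Submission
  imports Defs
begin


lemma V_char: "x \<in> fst (copies m (fan n)) \<longleftrightarrow> fst x < m \<and> snd x \<le> n"
  unfolding copies_def fan_def by (cases x) auto

lemma E_char: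
  "e \<in> snd (copies m (fan n)) \<longleftrightarrow>
    (\<exists>j i. j<m \<and> 1\<le>i \<and> i\<le>n \<and> e = {(j,0),(j,i)}) \<or>
    (\<exists>j i. j<m \<and> 1\<le>i \<and> i+1\<le>n \<and> e = {(j,i),(j,i+1)})" (is "?L \<longleftrightarrow> ?R")
proof
  assume ?L
  then obtain j e0 where j: "j<m" "e = Pair j ` e0"
    "e0 \<in> {{0, i} |i. 1 \<le> i \<and> i \<le> n} \<union> {{i, i + 1} |i. 1 \<le> i \<and> i \<le> n - 1}"
  proof -
    have "e \<in> (\<Union>i<m. (\<lambda>e. Pair i ` e) ` ({{0, i} |i. 1 \<le> i \<and> i \<le> n} \<union> {{i, i + 1} |i. 1 \<le> i \<and> i \<le> n - 1}))"
      using \<open>?L\<close> by (simp add: copies_def fan_def)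
    then show ?thesis using that by blast
  qed
  from j(3) show ?R
  proof
    assume "e0 \<in> {{0, i} |i. 1 \<le> i \<and> i \<le> n}"
    then obtain i where "e0 = {0,i}" "1\<le>i" "i\<le>n" by blast
    then have "e = {(j,0),(j,i)}" "1\<le>i" "i\<le>n" using j by auto
    then show ?R using j(1) by blast
  next
    assume "e0 \<in> {{i, i + 1} |i. 1 \<le> i \<and> i \<le> n - 1}"
    then obtain i where "e0 = {i,i+1}" "1\<le>i" "i\<le>n - 1" by blast
    then have "i+1\<le>n" "e = {(j,i),(j,i+1)}" "1\<le>i" using j by auto
    then show ?R using j(1) by blast
  qed
next
  assume ?R
  have S: "snd (copies m (fan n)) = (\<Union>i<m. (\<lambda>e. Pair i ` e) ` ({{0, i} |i. 1 \<le> i \<and> i \<le> n} \<union> {{i, i + 1} |i. 1 \<le> i \<and> i \<le> n - 1}))"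
    by (simp add: copies_def fan_def)
  from \<open>?R\<close> show ?L unfolding S
  proof (elim disjE exE conjE)
    fix j i assume h: "j<m" "1\<le>i" "i\<le>n" "e = {(j,0),(j,i)}"
    have "{0,i} \<in> {{0, i} |i. 1 \<le> i \<and> i \<le> n} \<union> {{i, i + 1} |i. 1 \<le> i \<and> i \<le> n - 1}" using h by blast
    moreover have "e = Pair j ` {0,i}" using h by simp
    ultimately show "e \<in> (\<Union>i<m. (\<lambda>e. Pair i ` e) ` ({{0, i} |i. 1 \<le> i \<and> i \<le> n} \<union> {{i, i + 1} |i. 1 \<le> i \<and> i \<le> n - 1}))"
      using h(1) by blast
  next
    fix j i assume h: "j<m" "1\<le>i" "i+1\<le>n" "e = {(j,i),(j,i+1)}"
    have "{i,i+1} \<in> {{0, i} |i. 1 \<le> i \<and> i \<le> n} \<union> {{i, i + 1} |i. 1 \<le> i \<and> i \<le> n - 1}" using h by force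
    moreover have "e = Pair j ` {i,i+1}" using h by simp
    ultimately show "e \<in> (\<Union>i<m. (\<lambda>e. Pair i ` e) ` ({{0, i} |i. 1 \<le> i \<and> i \<le> n} \<union> {{i, i + 1} |i. 1 \<le> i \<and> i \<le> n - 1}))"
      using h(1) by blast
  qed
qed

definition adj :: "nat \<Rightarrow> nat \<Rightarrow> nat \<Rightarrow> bool" where
  "adj n a b \<longleftrightarrow> (a=0 \<and> 1\<le>b \<and> b\<le>n) \<or> (b=0 \<and> 1\<le>a \<and> a\<le>n) \<or> (1\<le>a \<and> b=a+1 \<and> b\<le>n) \<or> (1\<le>b \<and> a=b+1 \<and> a\<le>n)"

lemma adj_sym: "adj n a b = adj n b a" unfolding adj_def by auto

lemma adj_pos: "a \<noteq> 0 \<Longrightarrow> b \<noteq> 0 \<Longrightarrow> adj n a b \<longleftrightarrow> ((b = a+1 \<or> a = b+1) \<and> a \<le> n \<and> b \<le> n)"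
  unfolding adj_def by auto

lemma adj_0: "adj n 0 b \<longleftrightarrow> 1 \<le> b \<and> b \<le> n"
  unfolding adj_def by auto

lemma tri0:
  assumes "adj n b c" "b \<noteq> 0" "c \<noteq> 0"
  shows "\<exists>i. 1\<le>i \<and> i+1\<le>n \<and> {0,b,c} = {0,i,i+1::nat}"
proof -
  from assms have "(c = b+1 \<or> b = c+1) \<and> b \<le> n \<and> c \<le> n" using adj_pos by blast
  then show ?thesis
  proof (elim conjE disjE)
    assume "c = b+1" "b\<le>n" "c\<le>n" then show ?thesis using assms by (intro exI[of _ b]) auto
  next
    assume "b = c+1" "b\<le>n" "c\<le>n" then show ?thesis using assms by (intro exI[of _ c]) auto
  qed
qed

lemma tri_nat:
  assumes "adj n a b" "adj n b c" "adj n a c" "a\<noteq>b" "b\<noteq>c" "a\<noteq>c"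
  shows "\<exists>i. 1\<le>i \<and> i+1\<le>n \<and> {a,b,c} = {0,i,i+1}"
proof -
  have "a = 0 \<or> b = 0 \<or> c = 0"
  proof (rule ccontr)
    assume "\<not> ?thesis"
    then show False using assms by (auto simp: adj_pos)
  qed
  then show ?thesis
  proof (elim disjE)
    assume "a = 0" then show ?thesis using tri0[of n b c] assms by auto
  next
    assume "b = 0" then show ?thesis using tri0[of n a c] assms by (auto simp: insert_commute)
  next
    assume "c = 0" then show ?thesis using tri0[of n a b] assms by (auto simp: insert_commute)
  qed
qed


definition lab :: "nat \<Rightarrow> nat \<Rightarrow> (nat \<times> nat) + (nat \<times> nat) set \<Rightarrow> nat" where
  "lab m n x = (case x of Inl p \<Rightarrow> m * snd p + fst p + 1
     | Inr e \<Rightarrow> (if Min (snd ` e) = 0 then m*(3*n+2-2*Max (snd ` e)) - Min (fst ` e)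
                 else m*(n+2*Min (snd ` e)+1) - Min (fst ` e)))"

definition ginv :: "nat \<Rightarrow> nat \<Rightarrow> nat \<Rightarrow> (nat \<times> nat) + (nat \<times> nat) set" where
  "ginv m n k = (if k \<le> m*(n+1) then Inl ((k-1) mod m, (k-1) div m)
     else (let r = k - m*(n+1) - 1; t = r div m; j = m - 1 - r mod m in
       if even t then Inr {(j,0),(j, n - t div 2)} else Inr {(j,(t+1) div 2),(j,(t+1) div 2 + 1)}))"

lemma lab_V: "lab m n (Inl (j,v)) = m*v+j+1" by (simp add: lab_def)
lemma lab_spoke: "1\<le>i \<Longrightarrow> lab m n (Inr {(j,0),(j,i)}) = m*(3*n+2-2*i)-j" by (simp add: lab_def)
lemma lab_path: "1\<le>i \<Longrightarrow> lab m n (Inr {(j,i),(j,i+1)}) = m*(n+2*i+1)-j" by (simp add: lab_def)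

lemma dm: "s < (m::nat) \<Longrightarrow> (m*q + s) div m = q \<and> (m*q+s) mod m = s"
  by simp

lemma tri_sum:
  fixes j m i n :: nat
  assumes "j < m" "1 \<le> i" "i+1 \<le> n"
  shows "(j+1) + (m*i+j+1) + (m*(i+1)+j+1) + (m*(3*n+2-2*i)-j) + (m*(3*n+2-2*(i+1))-j) + (m*(n+2*i+1)-j)
     = 3 + m*(7*n+4)"
proof -
  define k where "k = n - (i+1)"
  have n: "n = i+1+k" using assms unfolding k_def by linarith
  have e1: "3*n+2-2*i = i+5+3*k" "3*n+2-2*(i+1) = i+3+3*k" "n+2*i+1 = 3*i+2+k" "7*n+4 = 7*i+11+7*k" using n by auto
  have "m \<le> m*(i+5+3*k)" "m \<le> m*(i+3+3*k)" "m \<le> m*(3*i+2+k)" by auto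
  then show ?thesis unfolding e1 using assms(1) by (simp add: algebra_simps)
qed

lemma ginv_edge: "ginv m n (m*(n+1)+1+r) = (if even (r div m) then Inr {(m-1-r mod m,0),(m-1-r mod m, n - r div m div 2)} else Inr {(m-1-r mod m,(r div m+1) div 2),(m-1-r mod m,(r div m+1) div 2 + 1)})"
  unfolding ginv_def Let_def by simp

lemma back_V: assumes "j<m" "v\<le>n" shows "ginv m n (lab m n (Inl (j,v))) = Inl (j,v)"
proof -
  have "m*v \<le> m*n" using assms by simp
  moreover have "m*(n+1) = m*n+m" by simp
  ultimately have "m*v+j+1 \<le> m*(n+1)" using assms by linarith
  then show ?thesis using assms by (simp add: lab_V ginv_def)
qed

lemma back_spoke: assumes "j<m" "1\<le>i" "i\<le>n" shows "ginv m n (lab m n (Inr {(j,0),(j,i)})) = Inr {(j,0),(j,i)}"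
proof -
  define k where "k = n - i"
  have n: "n = i+k" using assms unfolding k_def by linarith
  have a: "m*(3*n+2-2*i)-j = m*(n+1) + 1 + (m*(2*k) + (m-1-j))"
    using assms(1) unfolding n by (simp add: algebra_simps)
  have b: "m*(3*n+2-2*i)-j > m*(n+1)" unfolding a by simp
  have s: "m-1-j < m" using assms(1) by simp
  have c: "(m*(2*k) + (m-1-j)) div m = 2*k" "(m*(2*k) + (m-1-j)) mod m = m-1-j" using dm[OF s] by blast+
  have "ginv m n (lab m n (Inr {(j,0),(j,i)})) = ginv m n (m*(n+1)+1+(m*(2*k)+(m-1-j)))"
    by (simp only: lab_spoke[OF assms(2)] a)
  also have "\<dots> = Inr {(j,0),(j,i)}" unfolding ginv_edge c using assms(1) by (simp add: n)
  finally show ?thesis .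
qed

lemma back_path: assumes "j<m" "1\<le>i" "i+1\<le>n" shows "ginv m n (lab m n (Inr {(j,i),(j,i+1)})) = Inr {(j,i),(j,i+1)}"
proof -
  define k where "k = n - (i+1)"
  have n: "n = i+1+k" using assms unfolding k_def by linarith
  define h where "h = i - 1"
  have i: "i = h+1" using assms unfolding h_def by linarith
  have a: "m*(n+2*i+1)-j = m*(n+1) + 1 + (m*(2*h+1) + (m-1-j))"
    using assms(1) unfolding n i by (simp add: algebra_simps)
  have b: "m*(n+2*i+1)-j > m*(n+1)" unfolding a by simp
  have s: "m-1-j < m" using assms(1) by simp
  have c: "(m*(2*h+1) + (m-1-j)) div m = 2*h+1" "(m*(2*h+1) + (m-1-j)) mod m = m-1-j" using dm[OF s] by blast+
  have "ginv m n (lab m n (Inr {(j,i),(j,i+1)})) = ginv m n (m*(n+1)+1+(m*(2*h+1)+(m-1-j)))"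
    by (simp only: lab_path[OF assms(2)] a)
  also have "\<dots> = Inr {(j,i),(j,i+1)}" unfolding ginv_edge c using assms(1) by (simp add: i)
  finally show ?thesis .
qed

definition inD :: "nat \<Rightarrow> nat \<Rightarrow> (nat \<times> nat) + (nat \<times> nat) set \<Rightarrow> bool" where
  "inD m n x \<longleftrightarrow> (\<exists>j v. j<m \<and> v\<le>n \<and> x = Inl (j,v)) \<or>
     (\<exists>j i. j<m \<and> 1\<le>i \<and> i\<le>n \<and> x = Inr {(j,0),(j,i)}) \<or>
     (\<exists>j i. j<m \<and> 1\<le>i \<and> i+1\<le>n \<and> x = Inr {(j,i),(j,i+1)})"

lemma lab_range:
  assumes "inD m n x" "n \<ge> 2"
  shows "lab m n x \<in> {1..3*m*n}"
  using assms(1) unfolding inD_def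
proof (elim disjE exE conjE)
  fix j v assume h: "j<m" "v\<le>n" "x = Inl (j,v)"
  have "m*v \<le> m*n" using h by simp
  moreover have "m*n + m \<le> 3*m*n" using assms(2) by simp
  ultimately have "m*v+j+1 \<le> 3*m*n" using h by linarith
  then show ?thesis unfolding h lab_V by simp
next
  fix j i assume h: "j<m" "1\<le>i" "i\<le>n" "x = Inr {(j,0),(j,i)}"
  define k where "k = n - i"
  have n: "n = i+k" using h unfolding k_def by linarith
  have e: "3*n+2-2*i = i+3*k+2" unfolding n by simp
  have "m*(i+3*k+2) \<le> 3*m*n" unfolding n using h by (simp add: algebra_simps)
  moreover have "m \<le> m*(i+3*k+2)" by simp
  ultimately show ?thesis unfolding h lab_spoke[OF h(2)] e using h(1) by (simp only: atLeastAtMost_iff) linarith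
next
  fix j i assume h: "j<m" "1\<le>i" "i+1\<le>n" "x = Inr {(j,i),(j,i+1)}"
  define k where "k = n - (i+1)"
  have n: "n = i+1+k" using h unfolding k_def by linarith
  have "m*(n+2*i+1) \<le> 3*m*n" unfolding n using h by (simp add: algebra_simps)
  moreover have "m \<le> m*(n+2*i+1)" by simp
  ultimately show ?thesis unfolding h lab_path[OF h(2)] using h(1) by (simp only: atLeastAtMost_iff) linarith
qed

lemma bwd:
  assumes "inD m n x" shows "ginv m n (lab m n x) = x"
  using assms unfolding inD_def
proof (elim disjE exE conjE)
  fix j v assume "j<m" "v\<le>n" "x = Inl (j,v)" then show ?thesis using back_V by simp
next
  fix j i assume "j<m" "1\<le>i" "i\<le>n" "x = Inr {(j,0),(j,i)}" then show ?thesis using back_spoke by simp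
next
  fix j i assume "j<m" "1\<le>i" "i+1\<le>n" "x = Inr {(j,i),(j,i+1)}" then show ?thesis using back_path by simp
qed

lemma inD_V: "j<m \<Longrightarrow> v\<le>n \<Longrightarrow> inD m n (Inl (j,v))" unfolding inD_def
  by (rule disjI1, rule exI[of _ j], rule exI[of _ v]) simp
lemma inD_S: "j<m \<Longrightarrow> 1\<le>i \<Longrightarrow> i\<le>n \<Longrightarrow> inD m n (Inr {(j,0),(j,i)})" unfolding inD_def
  by (rule disjI2, rule disjI1, rule exI[of _ j], rule exI[of _ i]) simp
lemma inD_P: "j<m \<Longrightarrow> 1\<le>i \<Longrightarrow> i+1\<le>n \<Longrightarrow> inD m n (Inr {(j,i),(j,i+1)})" unfolding inD_def
  by (rule disjI2, rule disjI2, rule exI[of _ j], rule exI[of _ i]) simp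

lemma fwd:
  assumes k: "1\<le>k" "k \<le> 3*m*n" and mn: "m\<ge>1" "n\<ge>2"
  shows "lab m n (ginv m n k) = k \<and> inD m n (ginv m n k)"
proof (cases "k \<le> m*(n+1)")
  case True
  define q where "q = (k-1) div m"
  define s where "s = (k-1) mod m"
  have ks: "k - 1 = m*q + s" unfolding q_def s_def by simp
  have sm: "s < m" unfolding s_def using mn by simp
  have "m*q < m*(n+1)" using ks True k by linarith
  then have "q < n+1" using nat_mult_less_cancel_disj by blast
  then have qn: "q \<le> n" by simp
  have g: "ginv m n k = Inl (s,q)" unfolding ginv_def q_def s_def using True by (simp only: if_True)
  have "lab m n (ginv m n k) = k" unfolding g lab_V using ks k by linarith
  moreover have "inD m n (ginv m n k)" unfolding g using sm qn by (rule inD_V)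
  ultimately show ?thesis by blast
next
  case False
  define r where "r = k - m*(n+1) - 1"
  have kr: "k = m*(n+1)+1+r" unfolding r_def using False by linarith
  define N where "N = n - 1"
  have nN: "n = N+1" "2*n-1 = 2*N+1" using mn unfolding N_def by linarith+
  have "3*m*n = m*(n+1) + m*(2*n-1)" unfolding nN by (simp add: algebra_simps)
  then have rl: "r < m*(2*n-1)" using kr k by linarith
  define t where "t = r div m"
  define s where "s = r mod m"
  have rs: "r = m*t + s" unfolding t_def s_def by simp
  have sm: "s < m" unfolding s_def using mn by simp
  have "m*t < m*(2*n-1)" using rs rl by linarith
  then have tl: "t < 2*n-1" using nat_mult_less_cancel_disj by blast
  have g0: "ginv m n k = (if even t then Inr {(m-1-s,0),(m-1-s, n - t div 2)} else Inr {(m-1-s,(t+1) div 2),(m-1-s,(t+1) div 2 + 1)})"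
    unfolding kr ginv_edge t_def s_def by (rule refl)
  have jm: "m-1-s < m" using mn by simp
  show ?thesis
  proof (cases "even t")
    case True
    then obtain h where h: "t = 2*h" by blast
    define i where "i = n - h"
    have i1: "1 \<le> i" "i \<le> n" using tl h unfolding i_def by linarith+
    have g: "ginv m n k = Inr {(m-1-s,0),(m-1-s,i)}" unfolding g0 using True h i_def by simp
    have e: "3*n+2-2*i = n+2+2*h" using tl h unfolding i_def by linarith
    have "lab m n (ginv m n k) = m*(n+2+2*h) - (m-1-s)" unfolding g lab_spoke[OF i1(1)] e ..
    also have "\<dots> = k"
    proof -
      have "m*(n+2+2*h) = m*(n+1) + m*(2*h) + m" by (simp add: algebra_simps)
      then show ?thesis unfolding kr rs h using sm by linarith
    qed
    finally show ?thesis unfolding g using inD_S[OF jm i1] by simp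
  next
    case False
    then obtain h where h: "t = 2*h+1" using oddE by blast
    define i where "i = h+1"
    have i1: "1 \<le> i" "i+1 \<le> n" using tl h unfolding i_def by linarith+
    have g: "ginv m n k = Inr {(m-1-s,i),(m-1-s,i+1)}" unfolding g0 using False h i_def by simp
    have e: "n+2*i+1 = n+3+2*h" unfolding i_def by simp
    have "lab m n (ginv m n k) = m*(n+3+2*h) - (m-1-s)" unfolding g lab_path[OF i1(1)] e ..
    also have "\<dots> = k"
    proof -
      have "m*(n+3+2*h) = m*(n+1) + m*(2*h+1) + m" by (simp add: algebra_simps)
      then show ?thesis unfolding kr rs h using sm by linarith
    qed
    finally show ?thesis unfolding g using inD_P[OF jm i1] by simp
  qed
qed



lemma E_pair: "{(j,a),(j',b)} \<in> snd (copies m (fan n)) \<Longrightarrow> j = j' \<and> j < m \<and> adj n a b"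
  unfolding E_char adj_def by (auto simp: doubleton_eq_iff)

lemma E_two: assumes "e \<in> snd (copies m (fan n))" shows "\<exists>u v. u \<noteq> v \<and> e = {u,v}"
  using assms unfolding E_char
proof (elim disjE exE conjE)
  fix j i assume h: "j<m" "1\<le>i" "i\<le>n" "e = {(j,0),(j,i)}"
  have "(j,0) \<noteq> (j,i)" using h by simp
  then show ?thesis using h(4) by blast
next
  fix j i assume h: "j<m" "1\<le>i" "i+1\<le>n" "e = {(j,i),(j,i+1)}"
  have "(j,i) \<noteq> (j,i+1)" by simp
  then show ?thesis using h(4) by blast
qed

lemma C3: "fst (cycle_graph 3) = {0,1,2}" "snd (cycle_graph 3) = {{0,1},{1,2},{2,0}}"
proof -
  show "fst (cycle_graph 3) = {0,1,2}" by (auto simp: cycle_graph_def)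
  have "{{i, (i+1) mod 3} | i. i < (3::nat)} = {{0,1},{1,2},{2,0}}"
  proof
    show "{{i, (i+1) mod 3} | i. i < (3::nat)} \<subseteq> {{0,1},{1,2},{2,0}}"
    proof
      fix x assume "x \<in> {{i, (i+1) mod 3} | i. i < (3::nat)}"
      then obtain i where "i < (3::nat)" "x = {i, (i+1) mod 3}" by blast
      moreover have "i = 0 \<or> i = 1 \<or> i = 2" using \<open>i<3\<close> by linarith
      ultimately show "x \<in> {{0,1},{1,2},{2,0}}" by auto
    qed
  next
    have "{0::nat,1} = {0, (0+1) mod 3}" "{1::nat,2} = {1, (1+1) mod 3}" "{2::nat,0} = {2, (2+1) mod 3}" by auto
    then show "{{0,1},{1,2},{2,0}} \<subseteq> {{i, (i+1) mod 3} | i. i < (3::nat)}" by fastforce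
  qed
  then show "snd (cycle_graph 3) = {{0,1},{1,2},{2,0}}" by (simp add: cycle_graph_def)
qed

definition pairs :: "'a set \<Rightarrow> 'a set set" where
  "pairs S = {{u,v} | u v. u \<in> S \<and> v \<in> S \<and> u \<noteq> v}"

lemma pairs3: "a \<noteq> b \<Longrightarrow> b \<noteq> c \<Longrightarrow> a \<noteq> c \<Longrightarrow> pairs {a,b,c} = {{a,b},{a,c},{b,c}}"
  unfolding pairs_def by (auto simp: insert_commute)

definition triV :: "nat \<Rightarrow> nat \<Rightarrow> (nat \<times> nat) set" where
  "triV j i = {(j,0),(j,i),(j,i+1)}"

lemma tri_sub:
  assumes "G' \<in> H_subgraphs (copies m (fan n)) (cycle_graph 3)"
  shows "\<exists>j i. j<m \<and> 1\<le>i \<and> i+1\<le>n \<and> fst G' = triV j i \<and> snd G' = pairs (triV j i)"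
proof -
  let ?G = "copies m (fan n)"
  from assms have sub: "is_subgraph G' ?G" and iso: "graph_iso (cycle_graph 3) G'"
    by (simp_all add: H_subgraphs_def)
  from iso have "\<exists>f. bij_betw f {0::nat,1,2} (fst G') \<and> (\<forall>u\<in>{0::nat,1,2}. \<forall>v\<in>{0,1,2}. {u,v} \<in> {{0,1},{1,2},{2,0}} \<longleftrightarrow> {f u, f v} \<in> snd G')"
    unfolding graph_iso_def C3 .
  then obtain f where bij: "bij_betw f {0::nat,1,2} (fst G')"
    and ff: "\<forall>u\<in>{0::nat,1,2}. \<forall>v\<in>{0,1,2}. {u,v} \<in> {{0,1},{1,2},{2,0}} \<longleftrightarrow> {f u, f v} \<in> snd G'"
    by (elim exE conjE)
  have FG: "fst G' = {f 0, f 1, f 2}" using bij by (auto simp: bij_betw_def)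
  have inj: "inj_on f {0,1,2}" using bij by (simp add: bij_betw_def)
  have d01: "f 0 \<noteq> f 1" using inj_onD[OF inj, of 0 1] by auto
  have d12: "f 1 \<noteq> f 2" using inj_onD[OF inj, of 1 2] by auto
  have d02: "f 0 \<noteq> f 2" using inj_onD[OF inj, of 0 2] by auto
  have e01: "{f 0, f 1} \<in> snd G'" using ff by auto
  have e12: "{f 1, f 2} \<in> snd G'" using ff by auto
  have e20: "{f 2, f 0} \<in> snd G'" using ff by auto
  have sE: "snd G' \<subseteq> snd ?G" and sV: "\<forall>e\<in>snd G'. e \<subseteq> fst G'"
    using sub by (auto simp: is_subgraph_def)
  obtain j0 a where x: "f 0 = (j0,a)" by (cases "f 0") auto
  obtain j1 b where y: "f 1 = (j1,b)" by (cases "f 1") auto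
  obtain j2 c where z: "f 2 = (j2,c)" by (cases "f 2") auto
  have p1: "j0 = j1 \<and> j0 < m \<and> adj n a b" using E_pair e01 sE x y by auto
  have p2: "j1 = j2 \<and> j1 < m \<and> adj n b c" using E_pair e12 sE y z by auto
  have p3: "j2 = j0 \<and> j2 < m \<and> adj n c a" using E_pair e20 sE z x by auto
  have ab: "a \<noteq> b" "b \<noteq> c" "a \<noteq> c" using d01 d12 d02 x y z p1 p2 by auto
  have q1: "adj n a b" using p1 by blast
  have q2: "adj n b c" using p2 by blast
  have q3: "adj n a c" using p3 adj_sym[of n c a] by blast
  obtain i where i: "1\<le>i" "i+1\<le>n" "{a,b,c} = {0,i,i+1}"
    using tri_nat[OF q1 q2 q3 ab] by blast
  have "fst G' = Pair j0 ` {a,b,c}" unfolding FG x y z using p1 p2 by simp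
  also have "\<dots> = triV j0 i" unfolding i(3) triV_def by simp
  finally have F: "fst G' = triV j0 i" .
  have "snd G' = pairs (fst G')"
  proof
    show "snd G' \<subseteq> pairs (fst G')"
    proof
      fix e assume e: "e \<in> snd G'"
      then obtain u v where uv: "u \<noteq> v" "e = {u,v}" using E_two sE by blast
      moreover have "e \<subseteq> fst G'" using sV e by blast
      ultimately show "e \<in> pairs (fst G')" unfolding pairs_def by blast
    qed
  next
    show "pairs (fst G') \<subseteq> snd G'"
    proof
      fix e assume "e \<in> pairs (fst G')"
      then obtain u v where uv: "u \<in> fst G'" "v \<in> fst G'" "u \<noteq> v" "e = {u,v}" unfolding pairs_def by blast
      have e10: "{f 1, f 0} \<in> snd G'" using e01 by (simp add: insert_commute)
    have e21: "{f 2, f 1} \<in> snd G'" using e12 by (simp add: insert_commute)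
    have e02: "{f 0, f 2} \<in> snd G'" using e20 by (simp add: insert_commute)
    have "u = f 0 \<or> u = f 1 \<or> u = f 2" "v = f 0 \<or> v = f 1 \<or> v = f 2" using uv(1,2) FG by auto
    then show "e \<in> snd G'" using uv(3,4) e01 e10 e12 e21 e20 e02 by (elim disjE) simp_all
    qed
  qed
  then have S: "snd G' = pairs (triV j0 i)" using F by simp
  have j0: "j0 < m" using p1 by blast
  show ?thesis by (rule exI[of _ j0], rule exI[of _ i]) (use F S j0 i in simp)
qed

lemma tri_in:
  assumes "j<m" "1\<le>i" "i+1\<le>n"
  shows "(triV j i, pairs (triV j i)) \<in> H_subgraphs (copies m (fan n)) (cycle_graph 3)"
proof -
  let ?G = "copies m (fan n)"
  have P: "pairs (triV j i) = {{(j,0),(j,i)},{(j,0),(j,i+1)},{(j,i),(j,i+1)}}"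
    unfolding triV_def using assms by (intro pairs3) auto
  have "{(j,0),(j,i)} \<in> snd ?G" unfolding E_char using assms by (intro disjI1 exI[of _ j] exI[of _ i]) auto
  moreover have "{(j,0),(j,i+1)} \<in> snd ?G" unfolding E_char using assms by (intro disjI1 exI[of _ j] exI[of _ "i+1"]) auto
  moreover have "{(j,i),(j,i+1)} \<in> snd ?G" unfolding E_char using assms by (intro disjI2 exI[of _ j] exI[of _ i]) auto
  ultimately have sE: "pairs (triV j i) \<subseteq> snd ?G" unfolding P by blast
  have sV: "triV j i \<subseteq> fst ?G" unfolding triV_def using assms by (auto simp: V_char)
  have sub: "is_subgraph (triV j i, pairs (triV j i)) ?G"
  proof -
    have "\<forall>e\<in>pairs (triV j i). e \<subseteq> triV j i" unfolding pairs_def by blast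
    then show ?thesis unfolding is_subgraph_def using sE sV by simp
  qed
  define f where "f = (\<lambda>k::nat. if k = 0 then (j,0) else if k = 1 then (j,i) else (j,i+1))"
  have f0: "f 0 = (j,0)" and f1: "f 1 = (j,i)" and f2: "f 2 = (j,i+1)" unfolding f_def by simp_all
  have f1': "f (Suc 0) = (j,i)" using f1 by simp
  have ij: "(j,0) \<noteq> (j,i)" "(j,i) \<noteq> (j,i+1)" "(j,0) \<noteq> (j,i+1)" using assms by simp_all
  have inj: "inj_on f {0,1,2}" unfolding inj_on_def using ij by (simp add: f0 f1 f1' f2)
  have im: "f ` {0,1,2} = triV j i" unfolding triV_def by (simp add: f0 f1 f1' f2)
  have bij: "bij_betw f {0,1,2} (triV j i)" unfolding bij_betw_def using inj im by blast
  have iff: "\<forall>u\<in>{0::nat,1,2}. \<forall>v\<in>{0::nat,1,2}. {u,v} \<in> {{0::nat,1},{1,2},{2,0}} \<longleftrightarrow> {f u, f v} \<in> pairs (triV j i)"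
    unfolding P using assms by (simp add: f0 f1 f1' f2 doubleton_eq_iff)
  have "graph_iso (cycle_graph 3) (triV j i, pairs (triV j i))"
    unfolding graph_iso_def C3 fst_conv snd_conv by (rule exI[of _ f]) (use bij iff in simp)
  then show ?thesis using sub unfolding H_subgraphs_def by blast
qed

lemma weight:
  assumes "j<m" "1\<le>i" "i+1\<le>n"
  shows "(\<Sum>v\<in>triV j i. lab m n (Inl v)) + (\<Sum>e\<in>pairs (triV j i). lab m n (Inr e)) = 3 + m*(7*n+4)"
proof -
  have ij: "(j,0) \<noteq> (j,i)" "(j,i) \<noteq> (j,i+1)" "(j,0) \<noteq> (j,i+1)" using assms by simp_all
  have P: "pairs (triV j i) = {{(j,0),(j,i)},{(j,0),(j,i+1)},{(j,i),(j,i+1)}}"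
    unfolding triV_def using ij by (intro pairs3) auto
  have d: "{(j,0),(j,i)} \<noteq> {(j,0),(j,i+1)}" "{(j,0),(j,i)} \<noteq> {(j,i),(j,i+1)}" "{(j,0),(j,i+1)} \<noteq> {(j,i),(j,i+1)}"
    using assms by (auto simp: doubleton_eq_iff)
  have s1: "(\<Sum>v\<in>triV j i. lab m n (Inl v)) = (j+1) + (m*i+j+1) + (m*(i+1)+j+1)"
    unfolding triV_def using ij by (simp add: lab_V)
  have l1: "lab m n (Inr {(j,0),(j,i)}) = m*(3*n+2-2*i)-j" using lab_spoke[OF assms(2)] .
  have l2: "lab m n (Inr {(j,0),(j,i+1)}) = m*(3*n+2-2*(i+1))-j" using lab_spoke[of "i+1"] by simp
  have l3: "lab m n (Inr {(j,i),(j,i+1)}) = m*(n+2*i+1)-j" using lab_path[OF assms(2)] .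
  have s2: "(\<Sum>e\<in>pairs (triV j i). lab m n (Inr e)) = (m*(3*n+2-2*i)-j) + (m*(3*n+2-2*(i+1))-j) + (m*(n+2*i+1)-j)"
    unfolding P using d by (simp only: sum.insert finite.emptyI finite.insertI insert_iff empty_iff sum.empty l1 l2 l3 simp_thms)
  show ?thesis unfolding s1 s2 using tri_sum[OF assms] by simp
qed

lemma pairs_triV: "1\<le>i \<Longrightarrow> pairs (triV j i) = {{(j,0),(j,i)},{(j,0),(j,i+1)},{(j,i),(j,i+1)}}"
  unfolding triV_def by (intro pairs3) auto

lemma D_inD:
  assumes "x \<in> Inl ` fst (copies m (fan n)) \<union> Inr ` snd (copies m (fan n))"
  shows "inD m n x"
  using assms
proof
  assume "x \<in> Inl ` fst (copies m (fan n))"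
  then obtain j v where "(j,v) \<in> fst (copies m (fan n))" "x = Inl (j,v)" by auto
  then show ?thesis using inD_V by (simp add: V_char)
next
  assume "x \<in> Inr ` snd (copies m (fan n))"
  then obtain e where e: "e \<in> snd (copies m (fan n))" "x = Inr e" by auto
  from e(1) show ?thesis unfolding E_char
  proof (elim disjE exE conjE)
    fix j i assume "j<m" "1\<le>i" "i\<le>n" "e = {(j,0),(j,i)}"
    then show ?thesis using inD_S e(2) by simp
  next
    fix j i assume "j<m" "1\<le>i" "i+1\<le>n" "e = {(j,i),(j,i+1)}"
    then show ?thesis using inD_P e(2) by simp
  qed
qed

lemma inD_D:
  assumes "inD m n x"
  shows "x \<in> Inl ` fst (copies m (fan n)) \<union> Inr ` snd (copies m (fan n))"
  using assms unfolding inD_def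
proof (elim disjE exE conjE)
  fix j v assume h: "j<m" "v\<le>n" "x = Inl (j,v)"
  have "(j,v) \<in> fst (copies m (fan n))" using h by (simp add: V_char)
  then show ?thesis using h(3) by blast
next
  fix j i assume h: "j<m" "1\<le>i" "i\<le>n" "x = Inr {(j,0),(j,i)}"
  have "{(j,0),(j,i)} \<in> snd (copies m (fan n))" unfolding E_char using h by (intro disjI1 exI[of _ j] exI[of _ i]) auto
  then show ?thesis using h(4) by blast
next
  fix j i assume h: "j<m" "1\<le>i" "i+1\<le>n" "x = Inr {(j,i),(j,i+1)}"
  have "{(j,i),(j,i+1)} \<in> snd (copies m (fan n))" unfolding E_char using h by (intro disjI2 exI[of _ j] exI[of _ i]) auto
  then show ?thesis using h(4) by blast
qed

lemma V_eq: "fst (copies m (fan n)) = {..<m} \<times> {..n}"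
  by (auto simp: V_char)

lemma vimg:
  assumes "m \<ge> 1"
  shows "(\<lambda>v. lab m n (Inl v)) ` fst (copies m (fan n)) = {1..m*(n+1)}"
proof
  show "(\<lambda>v. lab m n (Inl v)) ` fst (copies m (fan n)) \<subseteq> {1..m*(n+1)}"
  proof
    fix k assume "k \<in> (\<lambda>v. lab m n (Inl v)) ` fst (copies m (fan n))"
    then obtain j v where h: "j<m" "v\<le>n" "k = lab m n (Inl (j,v))" by (auto simp: V_char)
    have "m*v \<le> m*n" using h by simp
    moreover have "m*(n+1) = m*n+m" by simp
    ultimately have "m*v+j+1 \<le> m*(n+1)" using h by linarith
    then show "k \<in> {1..m*(n+1)}" using h by (simp add: lab_V)
  qed
next
  show "{1..m*(n+1)} \<subseteq> (\<lambda>v. lab m n (Inl v)) ` fst (copies m (fan n))"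
  proof
    fix k assume k: "k \<in> {1..m*(n+1)}"
    define q where "q = (k-1) div m"
    define s where "s = (k-1) mod m"
    have ks: "k - 1 = m*q + s" unfolding q_def s_def by simp
    have sm: "s < m" unfolding s_def using assms by simp
    have "m*q < m*(n+1)" using ks k by auto
    then have "q < n+1" using nat_mult_less_cancel_disj by blast
    then have "(s,q) \<in> fst (copies m (fan n))" using sm by (simp add: V_char)
    moreover have "lab m n (Inl (s,q)) = k"
    proof -
      have "1 \<le> k" using k by simp
      then have "m*q+s+1 = k" using ks by linarith
      then show ?thesis by (simp add: lab_V)
    qed
    ultimately show "k \<in> (\<lambda>v. lab m n (Inl v)) ` fst (copies m (fan n))" by force
  qed
qed

theorem theorem2:
  fixes m n :: nat
  assumes "m \<ge> 2" and "n \<ge> 3"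
  shows "H_supermagic (copies m (fan n)) (cycle_graph 3)"
proof -
  let ?G = "copies m (fan n)"
  let ?D = "Inl ` fst ?G \<union> Inr ` snd ?G"
  have mn: "m \<ge> 1" "n \<ge> 2" using assms by auto
  have bij0: "bij_betw (lab m n) ?D {1..3*m*n}"
  proof (rule bij_betw_byWitness[where f'="ginv m n"])
    show "\<forall>a\<in>?D. ginv m n (lab m n a) = a" using D_inD bwd by blast
    show "\<forall>a'\<in>{1..3*m*n}. lab m n (ginv m n a') = a'" using fwd mn by auto
    show "lab m n ` ?D \<subseteq> {1..3*m*n}" using D_inD lab_range mn by blast
    show "ginv m n ` {1..3*m*n} \<subseteq> ?D"
    proof
      fix x assume "x \<in> ginv m n ` {1..3*m*n}"
      then obtain k where k: "k \<in> {1..3*m*n}" "x = ginv m n k" by blast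
      then have "inD m n x" using fwd[of k m n] mn by auto
      then show "x \<in> ?D" by (rule inD_D)
    qed
  qed
  have fD: "finite ?D" using bij0 bij_betw_finite by blast
  have "card ?D = 3*m*n" using bij_betw_same_card[OF bij0] by simp
  moreover have "card ?D = card (fst ?G) + card (snd ?G)"
  proof -
    have f1: "finite (Inl ` fst ?G :: ((nat\<times>nat) + (nat\<times>nat) set) set)" using fD by blast
    have f2: "finite (Inr ` snd ?G :: ((nat\<times>nat) + (nat\<times>nat) set) set)" using fD by blast
    have "card ?D = card (Inl ` fst ?G :: ((nat\<times>nat) + (nat\<times>nat) set) set) + card (Inr ` snd ?G :: ((nat\<times>nat) + (nat\<times>nat) set) set)"
      by (rule card_Un_disjoint[OF f1 f2]) auto
    also have "\<dots> = card (fst ?G) + card (snd ?G)"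
      by (simp add: card_image)
    finally show ?thesis .
  qed
  ultimately have cardsum: "card (fst ?G) + card (snd ?G) = 3*m*n" by simp
  have bij: "bij_betw (lab m n) ?D {1..card (fst ?G) + card (snd ?G)}" unfolding cardsum by (rule bij0)
  have cV: "card (fst ?G) = m*(n+1)" unfolding V_eq by (simp add: card_cartesian_product)
  have magic: "\<forall>G'\<in>H_subgraphs ?G (cycle_graph 3).
        (\<Sum>v\<in>fst G'. lab m n (Inl v)) + (\<Sum>e\<in>snd G'. lab m n (Inr e)) = 3 + m*(7*n+4)"
  proof
    fix G' assume "G' \<in> H_subgraphs ?G (cycle_graph 3)"
    then obtain j i where h: "j<m" "1\<le>i" "i+1\<le>n" "fst G' = triV j i" "snd G' = pairs (triV j i)"
      using tri_sub by blast
    show "(\<Sum>v\<in>fst G'. lab m n (Inl v)) + (\<Sum>e\<in>snd G'. lab m n (Inr e)) = 3 + m*(7*n+4)"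
      unfolding h(4,5) using weight[OF h(1-3)] .
  qed
  have cover: "H_covering ?G (cycle_graph 3)"
    unfolding H_covering_def
  proof
    fix e assume "e \<in> snd ?G"
    then show "\<exists>G'\<in>H_subgraphs ?G (cycle_graph 3). e \<in> snd G'" unfolding E_char
    proof (elim disjE exE conjE)
      fix j i assume h: "j<m" "1\<le>i" "i\<le>n" "e = {(j,0),(j,i)}"
      show ?thesis
      proof (cases "i+1 \<le> n")
        case True
        have "e \<in> pairs (triV j i)" unfolding h(4) pairs_triV[OF h(2)] by simp
        then show ?thesis using tri_in[OF h(1,2) True] by force
      next
        case False
        then have i: "i = (i-1)+1" "1 \<le> i-1" "(i-1)+1 \<le> n" using h assms by auto
        have "e \<in> pairs (triV j (i-1))" unfolding h(4) pairs_triV[OF i(2)] using h(2) by simp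
        then show ?thesis using tri_in[OF h(1) i(2,3)] by force
      qed
    next
      fix j i assume h: "j<m" "1\<le>i" "i+1\<le>n" "e = {(j,i),(j,i+1)}"
      have "e \<in> pairs (triV j i)" unfolding h(4) pairs_triV[OF h(2)] by simp
      then show ?thesis using tri_in[OF h(1,2,3)] by force
    qed
  qed
  show ?thesis
    unfolding H_supermagic_def H_supermagic_labeling_def H_magic_labeling_def
    using cover bij magic vimg[OF mn(1)] cV by metis
qed

end
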